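(* For every integer $n\ge 5$, the independence polynomial $I(T_{4,n};t)$ is unimodal and its mode belongs to $\{\lambda_{n+2},\lambda_{n+2}+1\}$, where $\lambda_{k}$ denotes the mode of the independence polynomial $I(P_k;t)$ of the path $P_k$ on $k$ vertices.
   Context: For a simple graph $G$, the independence polynomial is $I(G;t)=\sum_{k\ge 0}s_k(G)t^k$, where $s_k(G)$ is the number of independent sets (sets of pairwise non-adjacent vertices) of size $k$ in $G$. $P_k$ is the path on $k$ vertices; its independence polynomial is known to be unimodal. For integers $m\ge 3$, $n\ge 1$, the tadpole graph $T_{m,n}$ is the simple graph with vertex set $\{x_1,\dots,x_m,y_1,\dots,y_n\}$ and edges $\{x_i,x_{i+1}\}$ for $1\le i\le m-1$, $\{x_m,x_1\}$, $\{y_j,y_{j+1}\}$ for $1\le j\le n-1$, and $\{x_m,y_1\}$. A polynomial $\sum a_kt^k$ with nonnegative coefficients is unimodal if $a_0\le\cdots\le a_m\ge a_{m+1}\ge\cdots$ for some $m$; with $a_{-1}=0$, its mode is the unique $i$ with $a_{i-1}<a_i\ge a_{i+1}\ge a_{i+2}\ge\cdots$. *)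

theory Defs
  imports Main
begin

definition independent_set :: "'a set \<Rightarrow> ('a \<Rightarrow> 'a \<Rightarrow> bool) \<Rightarrow> 'a set \<Rightarrow> bool" where
  "independent_set V E S \<longleftrightarrow> S \<subseteq> V \<and> (\<forall>u\<in>S. \<forall>v\<in>S. \<not> E u v)"

definition indep_coeff :: "'a set \<Rightarrow> ('a \<Rightarrow> 'a \<Rightarrow> bool) \<Rightarrow> nat \<Rightarrow> nat" where
  "indep_coeff V E k = card {S. independent_set V E S \<and> card S = k}"

definition path_V :: "nat \<Rightarrow> nat set" where
  "path_V k = {..<k}"

definition path_E :: "nat \<Rightarrow> nat \<Rightarrow> nat \<Rightarrow> bool" where
  "path_E k u v \<longleftrightarrow> u < k \<and> v < k \<and> (u + 1 = v \<or> v + 1 = u)"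

text \<open>Tadpole T_{m,n}: x_i = Inl i (1 \<le> i \<le> m), y_j = Inr j (1 \<le> j \<le> n).\<close>
definition tadpole_V :: "nat \<Rightarrow> nat \<Rightarrow> (nat + nat) set" where
  "tadpole_V m n = Inl ` {1..m} \<union> Inr ` {1..n}"

definition tadpole_arc :: "nat \<Rightarrow> nat \<Rightarrow> (nat + nat) \<Rightarrow> (nat + nat) \<Rightarrow> bool" where
  "tadpole_arc m n a b \<longleftrightarrow>
     (\<exists>i. 1 \<le> i \<and> i \<le> m - 1 \<and> a = Inl i \<and> b = Inl (i + 1)) \<or>
     (a = Inl m \<and> b = Inl 1) \<or>
     (\<exists>j. 1 \<le> j \<and> j \<le> n - 1 \<and> a = Inr j \<and> b = Inr (j + 1)) \<or>
     (a = Inl m \<and> b = Inr 1)"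

definition tadpole_E :: "nat \<Rightarrow> nat \<Rightarrow> (nat + nat) \<Rightarrow> (nat + nat) \<Rightarrow> bool" where
  "tadpole_E m n a b \<longleftrightarrow> tadpole_arc m n a b \<or> tadpole_arc m n b a"

definition unimodal :: "(nat \<Rightarrow> nat) \<Rightarrow> bool" where
  "unimodal a \<longleftrightarrow> (\<exists>m. (\<forall>i j. i \<le> j \<and> j \<le> m \<longrightarrow> a i \<le> a j) \<and>
                        (\<forall>i j. m \<le> i \<and> i \<le> j \<longrightarrow> a j \<le> a i))"

definition is_mode :: "(nat \<Rightarrow> nat) \<Rightarrow> nat \<Rightarrow> bool" where
  "is_mode a i \<longleftrightarrow> (if i = 0 then 0 < a 0 else a (i - 1) < a i) \<and>
                   (\<forall>j\<ge>i. a (Suc j) \<le> a j)"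

definition mode :: "(nat \<Rightarrow> nat) \<Rightarrow> nat" where
  "mode a = (THE i. is_mode a i)"

end

theory Submission
  imports Defs
begin

definition sh :: "(nat \<Rightarrow> nat) \<Rightarrow> nat \<Rightarrow> nat" where
  "sh a j = (case j of 0 \<Rightarrow> 0 | Suc i \<Rightarrow> a i)"

lemma sh_0[simp]: "sh a 0 = 0" and sh_Suc[simp]: "sh a (Suc i) = a i"
  by (simp_all add: sh_def)

lemma indep_coeff_0:
  assumes "finite V" shows "indep_coeff V E 0 = 1"
proof -
  have "{S. independent_set V E S \<and> card S = 0} = {{}}"
    using assms by (auto simp: independent_set_def dest: finite_subset)
  then show ?thesis by (simp add: indep_coeff_def)
qed

lemma indep_coeff_cong:
  assumes "\<And>u v. u \<in> V \<Longrightarrow> v \<in> V \<Longrightarrow> E u v = E' u v"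
  shows "indep_coeff V E = indep_coeff V E'"
proof -
  have "\<And>S. independent_set V E S = independent_set V E' S"
    using assms unfolding independent_set_def by blast
  then show ?thesis by (simp add: indep_coeff_def fun_eq_iff)
qed

lemma indep_coeff_iso:
  assumes inj: "inj_on f V" and e: "\<And>u v. u \<in> V \<Longrightarrow> v \<in> V \<Longrightarrow> E' (f u) (f v) = E u v"
  shows "indep_coeff (f ` V) E' k = indep_coeff V E k"
proof -
  have eq: "{S. independent_set (f ` V) E' S \<and> card S = k} =
        image f ` {S. independent_set V E S \<and> card S = k}"
  proof (intro equalityI subsetI)
    fix T assume "T \<in> {S. independent_set (f ` V) E' S \<and> card S = k}"
    then have T: "T \<subseteq> f ` V" "\<forall>u\<in>T. \<forall>v\<in>T. \<not> E' u v" "card T = k"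
      by (auto simp: independent_set_def)
    define S where "S = {x\<in>V. f x \<in> T}"
    have TS: "T = f ` S" using T(1) unfolding S_def by blast
    have "S \<subseteq> V" unfolding S_def by blast
    moreover have "\<forall>u\<in>S. \<forall>v\<in>S. \<not> E u v" using T(2) e unfolding S_def by blast
    moreover have "card S = k" using T(3) TS inj \<open>S \<subseteq> V\<close>
      by (metis card_image inj_on_subset)
    ultimately show "T \<in> image f ` {S. independent_set V E S \<and> card S = k}"
      using TS by (auto simp: independent_set_def)
  next
    fix T assume "T \<in> image f ` {S. independent_set V E S \<and> card S = k}"
    then obtain S where S: "S \<subseteq> V" "\<forall>u\<in>S. \<forall>v\<in>S. \<not> E u v" "card S = k" "T = f ` S"
      by (auto simp: independent_set_def)
    have "card T = k" using S inj by (metis card_image inj_on_subset)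
    moreover have "\<forall>u\<in>T. \<forall>v\<in>T. \<not> E' u v" using S e by blast
    ultimately show "T \<in> {S. independent_set (f ` V) E' S \<and> card S = k}"
      using S by (auto simp: independent_set_def)
  qed
  have "inj_on (image f) {S. independent_set V E S \<and> card S = k}"
    by (rule inj_on_subset[OF inj_on_image_Pow[OF inj]]) (auto simp: independent_set_def)
  then show ?thesis unfolding indep_coeff_def eq by (rule card_image)
qed

lemma indep_coeff_del:
  assumes fin: "finite V" and v: "v \<in> V" and nl: "\<not> E v v"
  shows "indep_coeff V E j = indep_coeff (V - {v}) E j + sh (indep_coeff (V - {v} - {u. E v u \<or> E u v}) E) j"
proof (cases j)
  case 0
  then show ?thesis using fin by (simp add: indep_coeff_0)
next
  case (Suc k)
  let ?N = "V - {v} - {u. E v u \<or> E u v}"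
  let ?A = "{S. independent_set V E S \<and> card S = Suc k}"
  let ?A1 = "{S. independent_set (V - {v}) E S \<and> card S = Suc k}"
  let ?B = "{S. independent_set ?N E S \<and> card S = k}"
  have split: "?A = ?A1 \<union> insert v ` ?B"
  proof (intro equalityI subsetI)
    fix S assume S: "S \<in> ?A"
    show "S \<in> ?A1 \<union> insert v ` ?B"
    proof (cases "v \<in> S")
      case False then show ?thesis using S by (auto simp: independent_set_def)
    next
      case True
      have fS: "finite S" using S fin by (auto simp: independent_set_def intro: finite_subset)
      have "S - {v} \<in> ?B" using S True fS by (auto simp: independent_set_def)
      moreover have "S = insert v (S - {v})" using True by blast
      ultimately show ?thesis by blast
    qed
  next
    fix S assume "S \<in> ?A1 \<union> insert v ` ?B"
    then show "S \<in> ?A"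
    proof
      assume "S \<in> ?A1" then show ?thesis by (auto simp: independent_set_def)
    next
      assume "S \<in> insert v ` ?B"
      then obtain T where T: "T \<in> ?B" "S = insert v T" by blast
      have fT: "finite T" using T fin by (auto simp: independent_set_def intro: finite_subset)
      have "v \<notin> T" using T by (auto simp: independent_set_def)
      then show ?thesis using T fT v nl by (auto simp: independent_set_def)
    qed
  qed
  have finA: "finite ?A1" "finite (insert v ` ?B)"
    using fin by (auto simp: independent_set_def intro: finite_subset[of _ "Pow V"])
  have disj: "?A1 \<inter> insert v ` ?B = {}" by (auto simp: independent_set_def)
  have inj: "inj_on (insert v) ?B"
    by (auto simp: inj_on_def independent_set_def)
  have "card ?A = card ?A1 + card ?B"
    unfolding split by (simp add: card_Un_disjoint[OF finA disj] card_image[OF inj])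
  then show ?thesis using Suc by (simp add: indep_coeff_def)
qed


abbreviation pc :: "nat \<Rightarrow> nat \<Rightarrow> nat" where
  "pc k \<equiv> indep_coeff (path_V k) (path_E k)"

lemma pc_0: "pc 0 j = (if j = 0 then 1 else 0)"
proof -
  have "{S. independent_set (path_V 0) (path_E 0) S \<and> card S = j} = (if j = 0 then {{}} else {})"
    by (auto simp: independent_set_def path_V_def)
  then show ?thesis by (simp add: indep_coeff_def)
qed

lemma pc_1: "pc (Suc 0) j = pc 0 j + sh (pc 0) j"
proof -
  have "pc 1 j = indep_coeff (path_V 1 - {0}) (path_E 1) j +
     sh (indep_coeff (path_V 1 - {0} - {u. path_E 1 0 u \<or> path_E 1 u 0}) (path_E 1)) j"
    by (rule indep_coeff_del) (auto simp: path_V_def path_E_def)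
  moreover have "path_V 1 - {0} = path_V 0" "path_V 1 - {0} - {u. path_E 1 0 u \<or> path_E 1 u 0} = path_V 0"
    by (auto simp: path_V_def)
  moreover have "indep_coeff (path_V 0) (path_E 1) = pc 0"
    by (rule indep_coeff_cong) (auto simp: path_V_def)
  ultimately show ?thesis by simp
qed

lemma pc_rec: "pc (Suc (Suc k)) j = pc (Suc k) j + sh (pc k) j"
proof -
  let ?E = "path_E (Suc (Suc k))"
  have "pc (Suc (Suc k)) j = indep_coeff (path_V (Suc (Suc k)) - {Suc k}) ?E j +
     sh (indep_coeff (path_V (Suc (Suc k)) - {Suc k} - {u. ?E (Suc k) u \<or> ?E u (Suc k)}) ?E) j"
    by (rule indep_coeff_del) (auto simp: path_V_def path_E_def)
  moreover have "path_V (Suc (Suc k)) - {Suc k} = path_V (Suc k)"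
    by (auto simp: path_V_def)
  moreover have "path_V (Suc (Suc k)) - {Suc k} - {u. ?E (Suc k) u \<or> ?E u (Suc k)} = path_V k"
    by (auto simp: path_V_def path_E_def)
  moreover have "indep_coeff (path_V (Suc k)) ?E = pc (Suc k)"
    by (rule indep_coeff_cong) (auto simp: path_V_def path_E_def)
  moreover have "indep_coeff (path_V k) ?E = pc k"
    by (rule indep_coeff_cong) (auto simp: path_V_def path_E_def)
  ultimately show ?thesis by simp
qed

lemma pc_closed: "pc k j = (Suc k - j) choose j"
proof (induction k arbitrary: j rule: less_induct)
  case (less k)
  show ?case
  proof (cases k)
    case 0 then show ?thesis by (cases j) (auto simp: pc_0)
  next
    case (Suc k1)
    show ?thesis
    proof (cases k1)
      case 0 then show ?thesis using Suc
        by (cases j) (auto simp: pc_1 pc_0 binomial_eq_0)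
    next
      case (Suc k2)
      have "pc k j = pc (Suc k2) j + sh (pc k2) j" using \<open>k = Suc k1\<close> Suc pc_rec by simp
      also have "\<dots> = ((Suc (Suc k2) - j) choose j) + sh (\<lambda>j. (Suc k2 - j) choose j) j"
        using less \<open>k = Suc k1\<close> Suc by (simp add: sh_def split: nat.split)
      also have "\<dots> = (Suc k - j) choose j"
      proof (cases j)
        case 0 then show ?thesis by simp
      next
        case (Suc i)
        show ?thesis
        proof (cases "i \<le> Suc k2")
          case True
          then have "Suc k - j = Suc (Suc k2 - i)" using Suc \<open>k = Suc k1\<close> \<open>k1 = Suc k2\<close> by simp
          then show ?thesis using Suc True by simp
        next
          case False then show ?thesis using Suc \<open>k = Suc k1\<close> \<open>k1 = Suc k2\<close> by (simp add: binomial_eq_0)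
        qed
      qed
      finally show ?thesis .
    qed
  qed
qed


lemma absorb2: "Suc j * (b choose Suc j) = (b - j) * (b choose j)"
  using binomial_absorption[of j b] binomial_absorb_comp[of b j] by simp

lemma ratio_id: "Suc j * (m - j) * ((m - j - 1) choose Suc j) = (m - 2*j) * (m - 2*j - 1) * ((m - j) choose j)"
proof -
  define a where "a = m - j"
  have e1: "Suc j * ((a - 1) choose Suc j) = (a - 1 - j) * ((a - 1) choose j)" by (rule absorb2)
  have e2: "(a - j) * (a choose j) = a * ((a - 1) choose j)" by (rule binomial_absorb_comp)
  have "Suc j * a * ((a - 1) choose Suc j) = a * (Suc j * ((a - 1) choose Suc j))" by (simp only: ac_simps)
  also have "\<dots> = (a - 1 - j) * (a * ((a - 1) choose j))" unfolding e1 by (simp only: ac_simps)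
  also have "\<dots> = (a - 1 - j) * ((a - j) * (a choose j))" unfolding e2 ..
  also have "\<dots> = (a - j) * (a - j - 1) * (a choose j)" by (simp add: ac_simps)
  finally have calc: "Suc j * a * ((a - 1) choose Suc j) = (a - j) * (a - j - 1) * (a choose j)" .
  have eqs: "a - j = m - 2*j" unfolding a_def by auto
  show ?thesis unfolding a_def[symmetric] eqs[symmetric] by (rule calc)
qed

definition D :: "nat \<Rightarrow> nat \<Rightarrow> bool" where
  "D m j \<longleftrightarrow> (m - 2*j) * (m - 2*j - 1) \<le> Suc j * (m - j)"

lemma dec_iff:
  assumes "m \<ge> 1"
  shows "((m - j - 1) choose Suc j \<le> (m - j) choose j) \<longleftrightarrow> D m j"
proof (cases "2*j \<le> m")
  case True
  let ?x = "(m - j) choose j" and ?y = "(m - j - 1) choose Suc j"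
  let ?al = "Suc j * (m - j)" and ?be = "(m - 2*j) * (m - 2*j - 1)"
  have x: "?x > 0" using True by simp
  have al: "?al > 0" using True assms by simp
  have id: "?al * ?y = ?be * ?x" using ratio_id[of j m] by simp
  have "?y \<le> ?x \<longleftrightarrow> ?al * ?y \<le> ?al * ?x" using al by simp
  also have "\<dots> \<longleftrightarrow> ?be * ?x \<le> ?al * ?x" using id by simp
  also have "\<dots> \<longleftrightarrow> ?be \<le> ?al" using x by simp
  finally show ?thesis unfolding D_def .
next
  case False
  have z: "(m - j - 1) choose Suc j = 0" by (rule binomial_eq_0) (use False in linarith)
  have "m - 2*j = 0" using False by simp
  then show ?thesis unfolding D_def z by simp
qed

lemma D_mono: "D m j \<Longrightarrow> D m (Suc j)"
proof -
  assume d: "D m j"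
  show ?thesis
  proof (cases "2 * Suc j \<le> m")
    case False then show ?thesis by (simp add: D_def)
  next
    case True
    define e where "e = m - (2*j + 2)"
    then have m: "m = 2*j + 2 + e" using True by simp
    have "(m - 2 * Suc j) * (m - 2 * Suc j - 1) \<le> (m - 2*j) * (m - 2*j - 1)"
      by (intro mult_le_mono) auto
    also have "\<dots> \<le> Suc j * (m - j)" using d by (simp add: D_def)
    also have "\<dots> \<le> Suc (Suc j) * (m - Suc j)"
      unfolding m by (simp add: algebra_simps)
    finally show ?thesis by (simp add: D_def)
  qed
qed

lemma D_shift: "D m j \<Longrightarrow> D (m + 2) (Suc j)"
proof -
  assume d: "D m j"
  have "m + 2 - 2 * Suc j = m - 2*j" by simp
  moreover have "Suc j * (m - j) \<le> Suc (Suc j) * (m + 2 - Suc j)"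
    by (intro mult_le_mono) auto
  ultimately show ?thesis using d by (simp add: D_def)
qed

lemma D_back: "D (m + 2) j \<Longrightarrow> D m j"
proof (rule ccontr)
  assume d: "D (m + 2) j" and nd: "\<not> D m j"
  have gt: "Suc j * (m - j) < (m - 2*j) * (m - 2*j - 1)" using nd unfolding D_def by (simp only: not_le)
  have le: "2*j + 2 \<le> m"
  proof (rule ccontr)
    assume "\<not> 2*j + 2 \<le> m"
    then have "m - 2*j - 1 = 0" by simp
    then show False using gt by simp
  qed
  define d0 where "d0 = m - (2*j + 2)"
  then have m: "m = 2*j + 2 + d0" using le by simp
  have gt': "(j + 1) * (j + 2 + d0) < (d0 + 2) * (d0 + 1)"
    using gt unfolding m by (simp add: algebra_simps)
  have d': "(d0 + 4) * (d0 + 3) \<le> (j + 1) * (j + 4 + d0)"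
    using d unfolding m D_def by (simp add: algebra_simps)
  show False
  proof (cases "j \<ge> 2*d0 + 4")
    case True
    have "(2*d0 + 5) * (3*d0 + 6) \<le> (j + 1) * (j + 2 + d0)"
      using True by (intro mult_le_mono) auto
    moreover have "(d0 + 2) * (d0 + 1) \<le> (2*d0 + 5) * (3*d0 + 6)"
      by (intro mult_le_mono) auto
    ultimately show False using gt' by linarith
  next
    case False
    have "(j + 1) * (j + 4 + d0) = (j + 1) * (j + 2 + d0) + 2*j + 2" by (simp add: algebra_simps)
    moreover have "(d0 + 4) * (d0 + 3) = (d0 + 2) * (d0 + 1) + 4*d0 + 10" by (simp add: algebra_simps)
    ultimately show False using gt' d' False by linarith
  qed
qed


lemma is_mode_unique:
  assumes "is_mode a i" "is_mode a m" shows "i = m"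
proof (rule ccontr)
  assume ne: "i \<noteq> m"
  { fix x y assume x: "is_mode a x" and y: "is_mode a y" and lt: "x < y"
    have "a (y - 1) < a y" using y lt by (simp add: is_mode_def split: if_splits)
    moreover have "y - 1 \<ge> x" using lt by simp
    then have "a (Suc (y - 1)) \<le> a (y - 1)" using x unfolding is_mode_def by blast
    ultimately have False using lt by (metis Suc_pred' less_nat_zero_code not_gr_zero not_le) }
  then show False using assms ne by (metis linorder_neqE_nat)
qed

lemma mode_char:
  assumes inc: "\<And>j. j < m \<Longrightarrow> a j < a (Suc j)"
      and dec: "\<And>j. m \<le> j \<Longrightarrow> a (Suc j) \<le> a j"
      and pos: "a 0 > 0"
  shows "unimodal a \<and> mode a = m"
proof
  have up: "a i \<le> a j" if "i \<le> j" "j \<le> m" for i j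
    using that
  proof (induction j)
    case 0 then show ?case by simp
  next
    case (Suc j)
    show ?case
    proof (cases "i = Suc j")
      case False
      then have "a i \<le> a j" using Suc by simp
      also have "a j \<le> a (Suc j)" using inc[of j] Suc by simp
      finally show ?thesis .
    qed simp
  qed
  have down: "a j \<le> a i" if "m \<le> i" "i \<le> j" for i j
    using that
  proof (induction j)
    case 0 then show ?case by simp
  next
    case (Suc j)
    show ?case
    proof (cases "i = Suc j")
      case False
      then have "a j \<le> a i" using Suc by simp
      moreover have "a (Suc j) \<le> a j" using dec[of j] Suc False by simp
      ultimately show ?thesis by simp
    qed simp
  qed
  show "unimodal a" unfolding unimodal_def using up down by blast
  have im: "is_mode a m"
    unfolding is_mode_def using pos inc[of "m - 1"] dec by (cases m) auto
  show "mode a = m" unfolding mode_def using im is_mode_unique by blast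
qed

definition lam :: "nat \<Rightarrow> nat" where "lam k = (LEAST j. D (Suc k) j)"

lemma pc_dec_iff: "pc k (Suc j) \<le> pc k j \<longleftrightarrow> D (Suc k) j"
proof -
  have "pc k (Suc j) = (Suc k - j - 1) choose Suc j" by (simp add: pc_closed)
  moreover have "pc k j = (Suc k - j) choose j" by (simp add: pc_closed)
  ultimately show ?thesis using dec_iff[of "Suc k" j] by simp
qed

lemma D_ex: "D m m" by (simp add: D_def)

lemma lam_D: "D (Suc k) (lam k)"
  unfolding lam_def by (rule LeastI[of _ "Suc k"]) (rule D_ex)

lemma D_after: "D m i \<Longrightarrow> i \<le> j \<Longrightarrow> D m j"
  by (induction j) (auto simp: le_Suc_eq intro: D_mono)

lemma pc_props:
  shows "\<And>j. j < lam k \<Longrightarrow> pc k j < pc k (Suc j)"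
    and "\<And>j. lam k \<le> j \<Longrightarrow> pc k (Suc j) \<le> pc k j"
    and "pc k 0 > 0"
proof -
  fix j assume "j < lam k"
  then have "\<not> D (Suc k) j" unfolding lam_def by (rule not_less_Least)
  then show "pc k j < pc k (Suc j)" using pc_dec_iff[of k j] by simp
next
  fix j assume "lam k \<le> j"
  then show "pc k (Suc j) \<le> pc k j" using pc_dec_iff D_after lam_D by blast
next
  show "pc k 0 > 0" by (simp add: pc_closed)
qed

lemma pc_mode: "mode (pc k) = lam k"
  using mode_char[of "lam k" "pc k", OF pc_props(1) pc_props(2) pc_props(3)] by blast

lemma lam_le: "lam k \<le> lam (Suc (Suc k))"
proof -
  have "D (Suc k + 2) (lam (Suc (Suc k)))" using lam_D[of "Suc (Suc k)"] by simp
  then have "D (Suc k) (lam (Suc (Suc k)))" by (rule D_back)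
  then show ?thesis unfolding lam_def[of k] by (rule Least_le)
qed

lemma lam_le2: "lam (Suc (Suc k)) \<le> Suc (lam k)"
proof -
  have "D (Suc k + 2) (Suc (lam k))" using lam_D[of k] by (rule D_shift)
  then have "D (Suc (Suc (Suc k))) (Suc (lam k))" by simp
  then show ?thesis unfolding lam_def[of "Suc (Suc k)"] by (rule Least_le)
qed


lemma del_isolated:
  assumes fin: "finite W" and nv: "v \<notin> W" and nl: "\<not> E v v"
      and iso: "\<And>u. u \<in> W \<Longrightarrow> \<not> E v u \<and> \<not> E u v"
  shows "indep_coeff (insert v W) E j = indep_coeff W E j + sh (indep_coeff W E) j"
proof -
  have "indep_coeff (insert v W) E j = indep_coeff (insert v W - {v}) E j +
     sh (indep_coeff (insert v W - {v} - {u. E v u \<or> E u v}) E) j"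
    by (rule indep_coeff_del) (use fin nl in auto)
  moreover have "insert v W - {v} = W" using nv by blast
  moreover have "insert v W - {v} - {u. E v u \<or> E u v} = W" using nv iso by blast
  ultimately show ?thesis by simp
qed

abbreviation tc :: "nat \<Rightarrow> (nat + nat) set \<Rightarrow> nat \<Rightarrow> nat" where
  "tc n W \<equiv> indep_coeff W (tadpole_E 4 n)"

lemma tE_Inr: "tadpole_E 4 n (Inr (Suc u)) (Inr (Suc v)) \<longleftrightarrow> (Suc u < n \<and> v = Suc u) \<or> (Suc v < n \<and> u = Suc v)"
  unfolding tadpole_E_def tadpole_arc_def by auto

lemma tc_R: "tc n (Inr ` {1..n}) = pc n"
proof -
  have e: "Inr ` {1..n} = (\<lambda>j. Inr (Suc j)) ` {..<n}"
  proof (intro equalityI subsetI)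
    fix x assume "x \<in> Inr ` {1..n}"
    then obtain i where "x = Inr i" "1 \<le> i" "i \<le> n" by auto
    then show "x \<in> (\<lambda>j. Inr (Suc j)) ` {..<n}" by (intro rev_image_eqI[of "i - 1"]) auto
  qed auto
  have h: "tc n ((\<lambda>j. Inr (Suc j)) ` {..<n}) k = pc n k" for k
    unfolding path_V_def
    by (rule indep_coeff_iso) (auto simp: inj_on_def tE_Inr path_E_def)
  show ?thesis unfolding e by (rule ext) (rule h)
qed

lemma tc_R': "tc n (Inr ` {2..n}) = pc (n - 1)"
proof -
  have e: "Inr ` {2..n} = (\<lambda>j. Inr (Suc (Suc j))) ` {..<n-1}"
  proof (intro equalityI subsetI)
    fix x assume "x \<in> Inr ` {2..n}"
    then obtain i where "x = Inr i" "2 \<le> i" "i \<le> n" by auto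
    then show "x \<in> (\<lambda>j. Inr (Suc (Suc j))) ` {..<n-1}" by (intro rev_image_eqI[of "i - 2"]) auto
  qed auto
  have h: "tc n ((\<lambda>j. Inr (Suc (Suc j))) ` {..<n-1}) k = pc (n-1) k" for k
    unfolding path_V_def
    by (rule indep_coeff_iso) (auto simp: inj_on_def tE_Inr path_E_def)
  show ?thesis unfolding e by (rule ext) (rule h)
qed

lemma tadpole_decomp:
  assumes n: "n \<ge> 1"
  shows "tc n (tadpole_V 4 n) j =
    tc n (insert (Inl 1) (insert (Inl 2) (insert (Inl 3) (Inr ` {1..n})))) j
    + sh (tc n (insert (Inl 2) (Inr ` {2..n}))) j"
proof -
  let ?E = "tadpole_E 4 n" and ?V = "tadpole_V 4 n"
  have "tc n ?V j = tc n (?V - {Inl 4}) j + sh (tc n (?V - {Inl 4} - {u. ?E (Inl 4) u \<or> ?E u (Inl 4)})) j"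
    by (rule indep_coeff_del) (auto simp: tadpole_V_def tadpole_E_def tadpole_arc_def)
  moreover have "?V - {Inl 4} = insert (Inl 1) (insert (Inl 2) (insert (Inl 3) (Inr ` {1..n})))"
    unfolding tadpole_V_def by auto
  moreover have "?V - {Inl 4} - {u. ?E (Inl 4) u \<or> ?E u (Inl 4)} = insert (Inl 2) (Inr ` {2..n})"
    unfolding tadpole_V_def tadpole_E_def tadpole_arc_def using n by auto
  ultimately show ?thesis by simp
qed

lemma tc_V1:
  "tc n (insert (Inl 1) (insert (Inl 2) (insert (Inl 3) (Inr ` {1..n})))) j =
   tc n (insert (Inl 1) (insert (Inl 3) (Inr ` {1..n}))) j + sh (tc n (Inr ` {1..n})) j"
proof -
  let ?E = "tadpole_E 4 n" and ?W = "insert (Inl 1) (insert (Inl 2) (insert (Inl 3) (Inr ` {1..n}))) :: (nat + nat) set"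
  have "tc n ?W j = tc n (?W - {Inl 2}) j + sh (tc n (?W - {Inl 2} - {u. ?E (Inl 2) u \<or> ?E u (Inl 2)})) j"
    by (rule indep_coeff_del) (auto simp: tadpole_E_def tadpole_arc_def)
  moreover have "?W - {Inl 2} = insert (Inl 1) (insert (Inl 3) (Inr ` {1..n}))" by auto
  moreover have "?W - {Inl 2} - {u. ?E (Inl 2) u \<or> ?E u (Inl 2)} = Inr ` {1..n}"
    unfolding tadpole_E_def tadpole_arc_def by auto
  ultimately show ?thesis by simp
qed

lemma tc_V2:
  "tc n (insert (Inl 1) (insert (Inl 3) (Inr ` {1..n}))) j =
   tc n (insert (Inl 3) (Inr ` {1..n})) j + sh (tc n (insert (Inl 3) (Inr ` {1..n}))) j"
  by (rule del_isolated) (auto simp: tadpole_E_def tadpole_arc_def)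

lemma tc_V3:
  "tc n (insert (Inl 3) (Inr ` {1..n})) j = tc n (Inr ` {1..n}) j + sh (tc n (Inr ` {1..n})) j"
  by (rule del_isolated) (auto simp: tadpole_E_def tadpole_arc_def)

lemma tc_V4:
  "tc n (insert (Inl 2) (Inr ` {2..n})) j = tc n (Inr ` {2..n}) j + sh (tc n (Inr ` {2..n})) j"
  by (rule del_isolated) (auto simp: tadpole_E_def tadpole_arc_def)

lemma tadpole_coeff:
  assumes n: "n \<ge> 1"
  shows "tc n (tadpole_V 4 n) j = pc (n + 2) j + sh (pc (n + 2)) j + sh (pc n) j"
proof -
  obtain n' where n': "n = Suc n'" using n by (cases n) auto
  have p1: "pc (Suc n) i = pc n i + sh (pc n') i" for i
    using pc_rec[of n' i] n' by simp
  have p2: "pc (n + 2) i = pc (Suc n) i + sh (pc n) i" for i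
    using pc_rec[of n i] by simp
  have f4: "tc n (insert (Inl 2) (Inr ` {2..n})) = (\<lambda>i. pc n' i + sh (pc n') i)"
    by (rule ext) (simp add: tc_V4 tc_R' n')
  have f3: "tc n (insert (Inl 3) (Inr ` {1..n})) = (\<lambda>i. pc n i + sh (pc n) i)"
    by (rule ext) (simp only: tc_V3 tc_R)
  have f2: "tc n (insert (Inl 1) (insert (Inl 3) (Inr ` {1..n}))) = (\<lambda>i. pc n i + sh (pc n) i + sh (\<lambda>i. pc n i + sh (pc n) i) i)"
    by (rule ext) (simp only: tc_V2 f3)
  have f1: "tc n (insert (Inl 1) (insert (Inl 2) (insert (Inl 3) (Inr ` {1..n})))) = (\<lambda>i. pc n i + sh (pc n) i + sh (\<lambda>i. pc n i + sh (pc n) i) i + sh (pc n) i)"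
    by (rule ext) (simp only: tc_V1 f2 tc_R)
  have c: "tc n (tadpole_V 4 n) j = pc n j + sh (pc n) j + sh (\<lambda>i. pc n i + sh (pc n) i) j
      + sh (pc n) j + sh (\<lambda>i. pc n' i + sh (pc n') i) j"
    unfolding tadpole_decomp[OF n] f1 f4 by simp
  show ?thesis unfolding c p2 p1
    by (cases j; cases "j - 1") (auto simp: sh_def)
qed


theorem proposition3p4:
  fixes n :: nat
  assumes "n \<ge> 5"
  shows "unimodal (indep_coeff (tadpole_V 4 n) (tadpole_E 4 n)) \<and>
         mode (indep_coeff (tadpole_V 4 n) (tadpole_E 4 n)) \<in>
           {mode (indep_coeff (path_V (n + 2)) (path_E (n + 2))),
            mode (indep_coeff (path_V (n + 2)) (path_E (n + 2))) + 1}"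
proof -
  let ?c = "tc n (tadpole_V 4 n)" and ?P = "pc (n + 2)" and ?Q = "pc n"
  define l where "l = lam (n + 2)"
  define u where "u = lam n"
  have lu1: "u \<le> l" "l \<le> Suc u" unfolding l_def u_def using lam_le[of n] lam_le2[of n] by simp_all
  have mP: "mode ?P = l" unfolding l_def by (rule pc_mode)
  have c: "?c j = ?P j + sh ?P j + sh ?Q j" for j
    using tadpole_coeff[of n j] assms by simp
  have Pinc: "j < l \<Longrightarrow> ?P j < ?P (Suc j)" for j unfolding l_def by (rule pc_props(1))
  have Pdec: "l \<le> j \<Longrightarrow> ?P (Suc j) \<le> ?P j" for j unfolding l_def by (rule pc_props(2))
  have Qinc: "j < u \<Longrightarrow> ?Q j < ?Q (Suc j)" for j unfolding u_def by (rule pc_props(1))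
  have Qdec: "u \<le> j \<Longrightarrow> ?Q (Suc j) \<le> ?Q j" for j unfolding u_def by (rule pc_props(2))
  have inc: "?c j < ?c (Suc j)" if "j < l" for j
  proof -
    have "sh ?P j \<le> ?P j" using Pinc that by (cases j) (auto intro: less_imp_le)
    moreover have "sh ?Q j \<le> ?Q j" using Qinc that lu1 by (cases j) (auto intro: less_imp_le)
    ultimately show ?thesis unfolding c using Pinc[OF that] by simp
  qed
  have dec: "?c (Suc j) \<le> ?c j" if jl: "Suc l \<le> j" for j
  proof -
    obtain i where j: "j = Suc i" using jl by (cases j) simp_all
    have "?P (Suc j) \<le> ?P j" using Pdec that by simp
    moreover have "?P (Suc i) \<le> ?P i" using Pdec that j by simp
    moreover have "?Q (Suc i) \<le> ?Q i" using Qdec that j lu1 by simp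
    ultimately show ?thesis unfolding c j by simp
  qed
  have pos: "?c 0 > 0" unfolding c using pc_props(3) by simp
  show ?thesis
  proof (cases "?c (Suc l) \<le> ?c l")
    case True
    have "unimodal ?c \<and> mode ?c = l"
    proof (rule mode_char)
      fix j assume "l \<le> j"
      then show "?c (Suc j) \<le> ?c j" using True dec by (cases "j = l") auto
    qed (use inc pos in auto)
    then show ?thesis using mP by simp
  next
    case False
    have "unimodal ?c \<and> mode ?c = Suc l"
      by (rule mode_char) (use inc dec False pos in \<open>auto simp: less_Suc_eq\<close>)
    then show ?thesis using mP by simp
  qed
qed

end
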